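(* Let $G$ be a graph, $\mathrm{Colors}=\{a_1,\ldots,a_q\}$, and consider a color-counting 1-locally checkable problem on $G$ (lists $L_v$, weight set $(\mathrm{Weights},\preceq,\circledast)$, weights $w_{v,a}$, color-counting check function $check$), and let $e_G$ be a clique-width $k$-expression of $G$ (irredundant and satisfying the standing relabeling assumption below). Let $N_0\in[0,\mathcal{N}]^{k\times q}$ be the all-zero matrix. Then the minimum weight of a proper coloring of $G$ equals the minimum of $\lambda(e_G,C,N_0)$ over all matrices $C\in[0,\mathcal{N}]^{k\times q}$ such that $C[i,a]=0$ for every label $i\in\overline{\ell(e_G)}$ and every color $a\in\mathrm{Colors}$.
   Context: Weight set: $(\mathrm{Weights},\preceq,\circledast)$ where $\preceq$ is a total order with a maximum element $\mathrm{Error}$, $\min$ denotes the minimum w.r.t. $\preceq$ (the minimum of an empty set is $\mathrm{Error}$), and $\circledast$ is a closed, commutative, associative binary operation with a neutral element, whose absorbing element is $\mathrm{Error}$, and such that $s_1\preceq s_2$ implies $s_1\circledast s_3\preceq s_2\circledast s_3$. A color-counting 1-locally checkable problem is given by: a simple finite graph $G$; colors $\mathrm{Colors}=\{a_1,\ldots,a_q\}$; for each $v$ a nonempty list $L_v\subseteq \mathrm{Colors}$; a weight set; weights $w_{v,a}\in\mathrm{Weights}\setminus\{\mathrm{Error}\}$ for $a\in L_v$; and a function $check(v,a,n_1,\ldots,n_q)\in\{\mathrm{True},\mathrm{False}\}$ ($v$ a vertex, $a$ a color, $n_j$ nonnegative integers). A coloring $c:V(G)\to\mathrm{Colors}$ is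 valid if $c(v)\in L_v$ for all $v$; its weight is $w(c)=\circledast_{v\in V(G)} w_{v,c(v)}$; it is proper if valid and $check(v,c(v),n_1,\ldots,n_q)$ holds for all $v$, where $n_j=|\{u\in N_G(v): c(u)=a_j\}|$. The problem asks for the minimum weight of a proper coloring. $\mathcal{N}\in[1,|V(G)|]$ is an integer with $check(v,a,n_1,\ldots,n_q)=check(v,a,\min(\mathcal{N},n_1),\ldots,\min(\mathcal{N},n_q))$ for all $v,a,n_1,\ldots,n_q$. $[x,y]$ denotes $\{x,x+1,\ldots,y\}$. Clique-width $k$-expressions use labels in $[1,k]$ and operations: $i(v)$ (new vertex $v$ with label $i$), $e_1\oplus e_2$ (disjoint union), $\eta_{i,j}(e)$, $i\neq j$ (add all edges between label-$i$ and label-$j$ vertices), $\rho_{i\to j}(e)$ (rename label $i$ to $j$). $G_e$ is the labeled graph built by $e$; subexpressions correspond to subtrees of the expression tree. The expression is irredundant: whenever $\eta_{i,j}$ is applied, there are no existing edges between label-$i$ and label-$j$ vertices. Standing assumption: in every relabeling $\rho_{i\to j}(e)$ occurring, some vertex of $G_e$ has label $j$. For a subexpression $e$, $\ell_e(v)$ is the label of $v$ in $G_e$, and $\overline{\ell(e)}$ is the set of labels $i\in[1,k]$ such that no vertex of $G_e$ has label $i$. $(C,N)$-coloring: for a subexpression $e$ of $e_G$ and $C,N\in[0,\mathcal{N}]^{k\times q}$ (rows indexed by labels, columns by colors), a valid coloring $c$ of $G_e$ (i.e. $c(v)\in L_v$) is a $(C,N)$-coloring of $G_e$ if (C1) $\min(\mathcal{N},|\{v\in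 V(G_e): c(v)=a,\ \ell_e(v)=i\}|)=C[i,a]$ for all $i,a$; and (C2) for every $v\in V(G_e)$, $check(v,c(v),n_1,\ldots,n_q)$ is true, where $n_j=\min(\mathcal{N},N[\ell_e(v),a_j]+|\{u\in N_{G_e}(v):c(u)=a_j\}|)$. $\lambda(e,C,N)$ is the minimum weight $w(c)=\circledast_{v\in V(G_e)}w_{v,c(v)}$ over all $(C,N)$-colorings of $G_e$ ($\mathrm{Error}$ if none exists). *)

theory Defs
  imports Main
begin

definition weight_set :: "'w::linorder \<Rightarrow> ('w \<Rightarrow> 'w \<Rightarrow> 'w) \<Rightarrow> 'w \<Rightarrow> bool" where
  "weight_set err op one \<longleftrightarrow>
     (\<forall>x. x \<le> err) \<and>
     comm_monoid op one \<and>
     (\<forall>x. op x err = err) \<and>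
     (\<forall>s1 s2 s3. s1 \<le> s2 \<longrightarrow> op s1 s3 \<le> op s2 s3)"

definition wmin :: "'w::linorder \<Rightarrow> 'w set \<Rightarrow> 'w" where
  "wmin err S = (if S = {} then err else Min S)"

definition wprod :: "('w \<Rightarrow> 'w \<Rightarrow> 'w) \<Rightarrow> 'w \<Rightarrow> ('v \<Rightarrow> 'w) \<Rightarrow> 'v set \<Rightarrow> 'w" where
  "wprod op one f A = comm_monoid_set.F op one f A"

datatype 'v cw =
    Vert nat 'v
  | Union "'v cw" "'v cw"
  | Join nat nat "'v cw"
  | Relab nat nat "'v cw"

fun verts :: "'v cw \<Rightarrow> 'v set" where
  "verts (Vert i v) = {v}"
| "verts (Union e1 e2) = verts e1 \<union> verts e2"
| "verts (Join i j e) = verts e"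
| "verts (Relab i j e) = verts e"

text \<open>lab e v is the label of v in G_e (meaningful for v in verts e).\<close>
fun lab :: "'v cw \<Rightarrow> 'v \<Rightarrow> nat" where
  "lab (Vert i v) u = i"
| "lab (Union e1 e2) u = (if u \<in> verts e1 then lab e1 u else lab e2 u)"
| "lab (Join i j e) u = lab e u"
| "lab (Relab i j e) u = (if lab e u = i then j else lab e u)"

fun edges :: "'v cw \<Rightarrow> ('v \<times> 'v) set" where
  "edges (Vert i v) = {}"
| "edges (Union e1 e2) = edges e1 \<union> edges e2"
| "edges (Join i j e) = edges e \<union>
     {(u, w). u \<in> verts e \<and> w \<in> verts e \<and>
              ((lab e u = i \<and> lab e w = j) \<or> (lab e u = j \<and> lab e w = i))}"
| "edges (Relab i j e) = edges e"

fun cw_expr :: "nat \<Rightarrow> 'v cw \<Rightarrow> bool" where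
  "cw_expr k (Vert i v) \<longleftrightarrow> i \<in> {1..k}"
| "cw_expr k (Union e1 e2) \<longleftrightarrow> cw_expr k e1 \<and> cw_expr k e2 \<and> verts e1 \<inter> verts e2 = {}"
| "cw_expr k (Join i j e) \<longleftrightarrow> cw_expr k e \<and> i \<in> {1..k} \<and> j \<in> {1..k} \<and> i \<noteq> j \<and>
     \<comment> \<open>irredundance\<close>
     (\<forall>u w. (u, w) \<in> edges e \<longrightarrow> \<not> (lab e u = i \<and> lab e w = j))"
| "cw_expr k (Relab i j e) \<longleftrightarrow> cw_expr k e \<and> i \<in> {1..k} \<and> j \<in> {1..k} \<and>
     \<comment> \<open>standing assumption\<close>
     (\<exists>v \<in> verts e. lab e v = j)"

definition unused_labels :: "nat \<Rightarrow> 'v cw \<Rightarrow> nat set" where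
  "unused_labels k e = {i \<in> {1..k}. \<forall>v \<in> verts e. lab e v \<noteq> i}"

text \<open>Colors are a_1,...,a_q, represented by 1..q. Count vectors (n_1,...,n_q)
  are represented as functions nat => nat that are 0 outside {1..q}.\<close>

definition valid_coloring :: "'v set \<Rightarrow> ('v \<Rightarrow> nat set) \<Rightarrow> ('v \<Rightarrow> nat) \<Rightarrow> bool" where
  "valid_coloring V L c \<longleftrightarrow> (\<forall>v \<in> V. c v \<in> L v)"

definition proper_coloring ::
  "'v set \<Rightarrow> ('v \<times> 'v) set \<Rightarrow> nat \<Rightarrow> ('v \<Rightarrow> nat set) \<Rightarrow>
   ('v \<Rightarrow> nat \<Rightarrow> (nat \<Rightarrow> nat) \<Rightarrow> bool) \<Rightarrow> ('v \<Rightarrow> nat) \<Rightarrow> bool" where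
  "proper_coloring V E q L check c \<longleftrightarrow> valid_coloring V L c \<and>
     (\<forall>v \<in> V. check v (c v)
        (\<lambda>j. if j \<in> {1..q} then card {u \<in> V. (v, u) \<in> E \<and> c u = j} else 0))"

definition coloring_weight :: "('w \<Rightarrow> 'w \<Rightarrow> 'w) \<Rightarrow> 'w \<Rightarrow> ('v \<Rightarrow> nat \<Rightarrow> 'w) \<Rightarrow> 'v set \<Rightarrow> ('v \<Rightarrow> nat) \<Rightarrow> 'w" where
  "coloring_weight op one w V c = wprod op one (\<lambda>v. w v (c v)) V"

text \<open>Matrices in [0,NN]^{k x q}: rows 1..k (labels), columns 1..q (colors);
  entries outside this index range are fixed to 0.\<close>
definition mats :: "nat \<Rightarrow> nat \<Rightarrow> nat \<Rightarrow> (nat \<Rightarrow> nat \<Rightarrow> nat) set" where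
  "mats k q NN = {C. \<forall>i a. (i \<in> {1..k} \<and> a \<in> {1..q} \<longrightarrow> C i a \<le> NN) \<and>
                           (\<not> (i \<in> {1..k} \<and> a \<in> {1..q}) \<longrightarrow> C i a = 0)}"

definition CN_coloring ::
  "nat \<Rightarrow> nat \<Rightarrow> nat \<Rightarrow> ('v \<Rightarrow> nat set) \<Rightarrow> ('v \<Rightarrow> nat \<Rightarrow> (nat \<Rightarrow> nat) \<Rightarrow> bool) \<Rightarrow>
   'v cw \<Rightarrow> (nat \<Rightarrow> nat \<Rightarrow> nat) \<Rightarrow> (nat \<Rightarrow> nat \<Rightarrow> nat) \<Rightarrow> ('v \<Rightarrow> nat) \<Rightarrow> bool" where
  "CN_coloring k q NN L check e C N c \<longleftrightarrow>
     valid_coloring (verts e) L c \<and>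
     (\<forall>i \<in> {1..k}. \<forall>a \<in> {1..q}.
        min NN (card {v \<in> verts e. c v = a \<and> lab e v = i}) = C i a) \<and>
     (\<forall>v \<in> verts e. check v (c v)
        (\<lambda>j. if j \<in> {1..q}
             then min NN (N (lab e v) j + card {u \<in> verts e. (v, u) \<in> edges e \<and> c u = j})
             else 0))"

definition lambda ::
  "'w::linorder \<Rightarrow> ('w \<Rightarrow> 'w \<Rightarrow> 'w) \<Rightarrow> 'w \<Rightarrow> ('v \<Rightarrow> nat \<Rightarrow> 'w) \<Rightarrow>
   nat \<Rightarrow> nat \<Rightarrow> nat \<Rightarrow> ('v \<Rightarrow> nat set) \<Rightarrow> ('v \<Rightarrow> nat \<Rightarrow> (nat \<Rightarrow> nat) \<Rightarrow> bool) \<Rightarrow>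
   'v cw \<Rightarrow> (nat \<Rightarrow> nat \<Rightarrow> nat) \<Rightarrow> (nat \<Rightarrow> nat \<Rightarrow> nat) \<Rightarrow> 'w" where
  "lambda err op one w k q NN L check e C N =
     wmin err {coloring_weight op one w (verts e) c | c. CN_coloring k q NN L check e C N c}"

end

theory Submission
  imports Defs "HOL-Library.FuncSet"
begin

lemma wmin_UN:
  fixes err :: "'w::linorder"
  assumes fin: "finite T" and top: "\<forall>x. x \<le> err" and sub: "\<forall>i\<in>I. S i \<subseteq> T"
  shows "wmin err (\<Union>i\<in>I. S i) = wmin err {wmin err (S i) | i. i \<in> I}"
proof (cases "(\<Union>i\<in>I. S i) = {}")
  case True
  let ?R = "{wmin err (S i) | i. i \<in> I}"
  have "?R \<subseteq> {err}" using True by (auto simp: wmin_def)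
  then have disj: "?R = {} \<or> ?R = {err}"
    by (rule subset_singletonD)
  have e1: "wmin err {} = err" and e2: "wmin err {err} = err" by (simp_all add: wmin_def)
  have r: "wmin err ?R = err"
  proof (cases "?R = {}")
    case True then show ?thesis by (simp only: True e1)
  next
    case False with disj have "?R = {err}" by blast
    then show ?thesis by (simp only: e2)
  qed
  show ?thesis by (simp only: True e1 r)
next
  case False
  let ?U = "\<Union>i\<in>I. S i"
  let ?R = "{wmin err (S i) | i. i \<in> I}"
  have finU: "finite ?U" by (rule finite_subset[OF _ fin]) (use sub in blast)
  obtain i0 where i0: "i0 \<in> I" "Min ?U \<in> S i0" using False finU Min_in by blast
  have finS: "\<And>i. i \<in> I \<Longrightarrow> finite (S i)" using fin sub finite_subset by blast
  have w0: "wmin err (S i0) = Min ?U"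
  proof -
    have ne: "S i0 \<noteq> {}" using i0 by auto
    have "Min (S i0) \<le> Min ?U" using i0 finS[OF i0(1)] by simp
    moreover have "Min ?U \<le> Min (S i0)" by (rule Min_antimono[OF UN_upper[OF i0(1)] ne finU])
    ultimately show ?thesis using ne by (simp add: wmin_def)
  qed
  have ge: "\<And>x. x \<in> ?R \<Longrightarrow> Min ?U \<le> x"
  proof -
    fix x assume "x \<in> ?R"
    then obtain i where i: "i \<in> I" "x = wmin err (S i)" by auto
    show "Min ?U \<le> x"
    proof (cases "S i = {}")
      case True then show ?thesis using i top by (simp add: wmin_def)
    next
      case False
      then show ?thesis using i finU finS[OF i(1)]
        by (simp add: wmin_def Min_antimono[OF UN_upper[OF i(1)] False finU])
    qed
  qed
  have finR: "finite ?R"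
  proof -
    have "?R \<subseteq> insert err ?U"
    proof
      fix x assume "x \<in> ?R"
      then obtain i where i: "i \<in> I" "x = wmin err (S i)" by auto
      show "x \<in> insert err ?U"
      proof (cases "S i = {}")
        case True then show ?thesis by (simp add: i wmin_def)
      next
        case False
        have m: "Min (S i) \<in> S i" by (rule Min_in[OF finS[OF i(1)] False])
        have "x = Min (S i)" using False by (simp add: i(2) wmin_def)
        then show ?thesis using m i(1) by blast
      qed
    qed
    then show ?thesis using finU finite_subset by blast
  qed
  have inR: "Min ?U \<in> ?R" using w0 i0 by force
  have "Min ?R = Min ?U"
    using finR inR ge by (meson Min_eqI)
  moreover have "?R \<noteq> {}" using inR by blast
  then have "wmin err ?R = Min ?R" unfolding wmin_def by (rule if_not_P)
  moreover have "wmin err ?U = Min ?U" unfolding wmin_def using False by (rule if_not_P)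
  ultimately show ?thesis by simp
qed

theorem lemma1:
  fixes V :: "'v set" and E :: "('v \<times> 'v) set"
    and q k NN :: nat
    and L :: "'v \<Rightarrow> nat set"
    and err one :: "'w::linorder" and op :: "'w \<Rightarrow> 'w \<Rightarrow> 'w"
    and w :: "'v \<Rightarrow> nat \<Rightarrow> 'w"
    and check :: "'v \<Rightarrow> nat \<Rightarrow> (nat \<Rightarrow> nat) \<Rightarrow> bool"
    and eG :: "'v cw"
  assumes ws: "weight_set err op one"
    and lists: "\<forall>v \<in> V. L v \<noteq> {} \<and> L v \<subseteq> {1..q}"
    and weights: "\<forall>v \<in> V. \<forall>a \<in> L v. w v a \<noteq> err"
    and NN: "NN \<in> {1..card V}"
    and NN_check: "\<forall>v a n. (\<forall>j. j \<notin> {1..q} \<longrightarrow> n j = 0) \<longrightarrow>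
                     check v a n = check v a (\<lambda>j. min NN (n j))"
    and expr: "cw_expr k eG"
    and GV: "V = verts eG"
    and GE: "E = edges eG"
  shows "wmin err {coloring_weight op one w V c | c. proper_coloring V E q L check c}
       = wmin err {lambda err op one w k q NN L check eG C (\<lambda>_ _. 0) | C.
                     C \<in> mats k q NN \<and>
                     (\<forall>i \<in> unused_labels k eG. \<forall>a \<in> {1..q}. C i a = 0)}"
proof -
  let ?P = "\<lambda>c. proper_coloring V E q L check c"
  let ?good = "\<lambda>C. C \<in> mats k q NN \<and> (\<forall>i \<in> unused_labels k eG. \<forall>a \<in> {1..q}. C i a = 0)"
  let ?CN = "\<lambda>C c. CN_coloring k q NN L check eG C (\<lambda>_ _. 0) c"
  let ?wt = "\<lambda>c. coloring_weight op one w V c"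
  define S where "S C = {?wt c | c. ?CN C c}" for C
  define Cc where "Cc c = (\<lambda>i a. if i \<in> {1..k} \<and> a \<in> {1..q}
      then min NN (card {v \<in> verts eG. c v = a \<and> lab eG v = i}) else 0)" for c
  have top: "\<forall>x. x \<le> err" using ws by (simp add: weight_set_def)
  have cm: "comm_monoid op one" using ws by (simp add: weight_set_def)
  interpret comm_monoid_set op one
    by (rule comm_monoid_set.intro[OF cm])
  have finV: "finite V" using NN card.infinite by fastforce
  have chk: "check v a (\<lambda>j. if j \<in> {1..q} then card (X j) else 0) =
     check v a (\<lambda>j. if j \<in> {1..q} then min NN (0 + card (X j)) else 0)" for v a X
  proof -
    have "check v a (\<lambda>j. if j \<in> {1..q} then card (X j) else 0) =
      check v a (\<lambda>j. min NN (if j \<in> {1..q} then card (X j) else 0))"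
      by (rule NN_check[rule_format]) auto
    also have "(\<lambda>j. min NN (if j \<in> {1..q} then card (X j) else 0)) =
       (\<lambda>j. if j \<in> {1..q} then min NN (0 + card (X j)) else 0)" by (rule ext) simp
    finally show ?thesis .
  qed
  have chk': "check v (c v) (\<lambda>j. if j \<in> {1..q} then card {u \<in> V. (v, u) \<in> E \<and> c u = j} else 0) =
     check v (c v) (\<lambda>j. if j \<in> {1..q} then min NN ((\<lambda>_ _. 0) (lab eG v) j +
        card {u \<in> verts eG. (v, u) \<in> edges eG \<and> c u = j}) else 0)" for v c
    using chk[of v "c v" "\<lambda>j. {u \<in> V. (v, u) \<in> E \<and> c u = j}"] unfolding GV GE by simp
  have A: "?CN (Cc c) c \<and> ?good (Cc c)" if P: "?P c" for c
  proof -
    have "?CN (Cc c) c"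
      unfolding CN_coloring_def
    proof (intro conjI ballI)
      show "valid_coloring (verts eG) L c" using P GV by (simp add: proper_coloring_def)
      show "min NN (card {v \<in> verts eG. c v = a \<and> lab eG v = i}) = Cc c i a"
        if "i \<in> {1..k}" "a \<in> {1..q}" for i a using that by (simp add: Cc_def)
      show "check v (c v) (\<lambda>j. if j \<in> {1..q} then min NN ((\<lambda>_ _. 0) (lab eG v) j +
        card {u \<in> verts eG. (v, u) \<in> edges eG \<and> c u = j}) else 0)" if "v \<in> verts eG" for v
      proof -
        have "check v (c v) (\<lambda>j. if j \<in> {1..q} then card {u \<in> V. (v, u) \<in> E \<and> c u = j} else 0)"
          using P[unfolded proper_coloring_def, THEN conjunct2, rule_format, of v] that GV by simp
        then show ?thesis by (rule chk'[THEN iffD1])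
      qed
    qed
    moreover have "Cc c \<in> mats k q NN" unfolding mats_def Cc_def by auto
    moreover have "\<forall>i \<in> unused_labels k eG. \<forall>a \<in> {1..q}. Cc c i a = 0"
    proof (intro ballI)
      fix i a assume "i \<in> unused_labels k eG" "a \<in> {1..q}"
      then have "{v \<in> verts eG. c v = a \<and> lab eG v = i} = {}" unfolding unused_labels_def by auto
      then have c0: "card {v \<in> verts eG. c v = a \<and> lab eG v = i} = 0" by (simp only: card.empty)
      show "Cc c i a = 0" unfolding Cc_def c0 by simp
    qed
    ultimately show ?thesis by blast
  qed
  have B: "?P c" if CN: "?CN C c" for C c
    unfolding proper_coloring_def
  proof (intro conjI ballI)
    show "valid_coloring V L c" using CN GV by (simp add: CN_coloring_def)
    show "check v (c v) (\<lambda>j. if j \<in> {1..q} then card {u \<in> V. (v, u) \<in> E \<and> c u = j} else 0)"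
      if "v \<in> V" for v
    proof -
      have "check v (c v) (\<lambda>j. if j \<in> {1..q} then min NN ((\<lambda>_ _. 0) (lab eG v) j +
        card {u \<in> verts eG. (v, u) \<in> edges eG \<and> c u = j}) else 0)"
        using CN[unfolded CN_coloring_def, THEN conjunct2, THEN conjunct2, rule_format, of v] that GV by simp
      then show ?thesis by (rule chk'[THEN iffD2])
    qed
  qed
  have eq1: "{?wt c | c. ?P c} = (\<Union>C\<in>{C. ?good C}. S C)"
  proof
    show "{?wt c | c. ?P c} \<subseteq> (\<Union>C\<in>{C. ?good C}. S C)"
    proof
      fix x assume "x \<in> {?wt c | c. ?P c}"
      then obtain c where "?P c" "x = ?wt c" by blast
      then show "x \<in> (\<Union>C\<in>{C. ?good C}. S C)" using A[of c] unfolding S_def by blast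
    qed
    show "(\<Union>C\<in>{C. ?good C}. S C) \<subseteq> {?wt c | c. ?P c}"
    proof
      fix x assume "x \<in> (\<Union>C\<in>{C. ?good C}. S C)"
      then obtain C where "x \<in> S C" by blast
      then obtain c where "?CN C c" "x = ?wt c" unfolding S_def by blast
      then show "x \<in> {?wt c | c. ?P c}" using B by blast
    qed
  qed
  define T where "T = ?wt ` (PiE V (\<lambda>_. {1..q}))"
  have finT: "finite T" unfolding T_def using finV by (simp add: finite_PiE)
  have PT: "?wt c \<in> T" if "?P c" for c
  proof -
    have "restrict c V \<in> PiE V (\<lambda>_. {1..q})"
      using that lists unfolding proper_coloring_def valid_coloring_def by auto
    moreover have "?wt (restrict c V) = ?wt c"
      unfolding coloring_weight_def wprod_def by (rule cong) auto
    ultimately show ?thesis unfolding T_def by (metis image_eqI)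
  qed
  have subT: "\<forall>C\<in>{C. ?good C}. S C \<subseteq> T"
  proof (intro ballI subsetI)
    fix C x assume "C \<in> {C. ?good C}" "x \<in> S C"
    then obtain c where "?CN C c" "x = ?wt c" unfolding S_def by blast
    then show "x \<in> T" using B PT by blast
  qed
  have lam: "lambda err op one w k q NN L check eG C (\<lambda>_ _. 0) = wmin err (S C)" for C
    unfolding lambda_def S_def GV by simp
  have R: "{lambda err op one w k q NN L check eG C (\<lambda>_ _. 0) | C. ?good C}
      = {wmin err (S i) | i. i \<in> {C. ?good C}}"
    unfolding lam mem_Collect_eq by (rule refl)
  have "wmin err {?wt c | c. ?P c} = wmin err (\<Union>C\<in>{C. ?good C}. S C)"
    by (simp only: eq1)
  also have "\<dots> = wmin err {wmin err (S i) | i. i \<in> {C. ?good C}}"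
    by (rule wmin_UN[OF finT top subT])
  also have "\<dots> = wmin err {lambda err op one w k q NN L check eG C (\<lambda>_ _. 0) | C. ?good C}"
    by (simp only: R)
  finally show ?thesis .
qed

end
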